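(* Let $q$ be a query user, let $\sigma>0$, and let $e$ be a set of users (an index node). Let $rpiv_1,\dots,rpiv_l$ be road-network pivot locations. For a user $u$ and pivot $rpiv_k$ let $a(u,k)=\frac{1}{|u.L|}\sum_{i=1}^{|u.L|} dist_{RN}(u.loc_i, rpiv_k)$, and let $lb_k(e)=\min_{u\in e}a(u,k)$, $ub_k(e)=\max_{u\in e}a(u,k)$. Define $lb\_dist_{RN}(S,e)=\max_{k=1}^{l} c_k$, where $c_k = lb_k(e)-a(q,k)$ if $a(q,k)<lb_k(e)$, $c_k=a(q,k)-ub_k(e)$ if $a(q,k)>ub_k(e)$, and $c_k=0$ otherwise. If $lb\_dist_{RN}(S,e)>\sigma$, then for every spatial-social $(k',d,\sigma,\theta)$-truss $S$ containing $q$ (for any parameters $k',d,\theta$ and query topic vector) no user of $e$ belongs to $S$.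
   Context: Users of a social network $G_s$ each have a finite nonempty set of check-in locations $u.loc_1,\dots,u.loc_{|u.L|}$ on a road network (undirected weighted graph) with shortest-path distance $dist_{RN}$. The average spatial distance is $avg\_dist_{RN}(u,v)=\frac{1}{|u.L||v.L|}\sum_i\sum_j dist_{RN}(u.loc_i,v.loc_j)$. $dist_{SN}(u,v)$ is the hop distance in $G_s$; the support of an edge in a subgraph $H$ is the number of triangles of $H$ containing it. A connected subgraph $S$ is a $(k',d)$-truss if every edge of $S$ has support in $S$ at least $k'-2$ and $dist_{SN}(u,v)<d$ for all $u,v\in V(S)$. Each edge $e_{a,b}$ carries topic probabilities $tp^j_{a,b}$; for a query topic vector $\mathcal{T}_q$ the influence of a path $a_1\to\dots\to a_m$ is $\prod_{i}\sum_j tp^j_{a_i,a_{i+1}}\mathcal{T}_q^j$. A spatial-social $(k',d,\sigma,\theta)$-truss is a user set $S$ that is a $(k',d)$-truss, satisfies $avg\_dist_{RN}(u,v)<\sigma$ for all $u,v\in S$, and such that for all $u,v\in S$ some path from $u$ to $v$ within $S$ has influence at least $\theta$. *)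

theory Defs
  imports Complex_Main "HOL-Library.Extended_Nat"
begin

definition rn_walk :: "('v \<times> 'v) set \<Rightarrow> 'v list \<Rightarrow> bool" where
  "rn_walk E xs \<longleftrightarrow> xs \<noteq> [] \<and> (\<forall>i. Suc i < length xs \<longrightarrow> (xs ! i, xs ! Suc i) \<in> E)"

definition walk_len :: "('v \<Rightarrow> 'v \<Rightarrow> real) \<Rightarrow> 'v list \<Rightarrow> real" where
  "walk_len w xs = (\<Sum>i<length xs - 1. w (xs ! i) (xs ! Suc i))"

definition road_network :: "'v set \<Rightarrow> ('v \<times> 'v) set \<Rightarrow> ('v \<Rightarrow> 'v \<Rightarrow> real) \<Rightarrow> bool" where
  "road_network V E w \<longleftrightarrow> finite V \<and> E \<subseteq> V \<times> V \<and> sym E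
     \<and> (\<forall>a b. (a, b) \<in> E \<longrightarrow> w a b = w b a \<and> w a b \<ge> 0)
     \<and> (\<forall>a\<in>V. \<forall>b\<in>V. \<exists>xs. rn_walk E xs \<and> hd xs = a \<and> last xs = b)"

definition dist_RN :: "('v \<times> 'v) set \<Rightarrow> ('v \<Rightarrow> 'v \<Rightarrow> real) \<Rightarrow> 'v \<Rightarrow> 'v \<Rightarrow> real" where
  "dist_RN E w a b = Inf {walk_len w xs | xs. rn_walk E xs \<and> hd xs = a \<and> last xs = b}"

definition avg_dist_RN :: "('v \<times> 'v) set \<Rightarrow> ('v \<Rightarrow> 'v \<Rightarrow> real) \<Rightarrow> ('u \<Rightarrow> 'v list) \<Rightarrow> 'u \<Rightarrow> 'u \<Rightarrow> real" where
  "avg_dist_RN E w loc u v =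
     sum_list (map (\<lambda>x. sum_list (map (\<lambda>y. dist_RN E w x y) (loc v))) (loc u))
     / (real (length (loc u)) * real (length (loc v)))"

definition social_network :: "'u set \<Rightarrow> ('u \<Rightarrow> 'u \<Rightarrow> bool) \<Rightarrow> bool" where
  "social_network U A \<longleftrightarrow> finite U \<and> (\<forall>u v. A u v \<longrightarrow> u \<in> U \<and> v \<in> U \<and> u \<noteq> v \<and> A v u)"

definition sn_walk :: "('u \<Rightarrow> 'u \<Rightarrow> bool) \<Rightarrow> 'u list \<Rightarrow> bool" where
  "sn_walk A xs \<longleftrightarrow> xs \<noteq> [] \<and> (\<forall>i. Suc i < length xs \<longrightarrow> A (xs ! i) (xs ! Suc i))"

text \<open>Hop distance in the whole social network (infinite if unreachable).\<close>
definition dist_SN :: "('u \<Rightarrow> 'u \<Rightarrow> bool) \<Rightarrow> 'u \<Rightarrow> 'u \<Rightarrow> enat" where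
  "dist_SN A u v = Inf {enat (length xs - 1) | xs. sn_walk A xs \<and> hd xs = u \<and> last xs = v}"

definition connected_in :: "('u \<Rightarrow> 'u \<Rightarrow> bool) \<Rightarrow> 'u set \<Rightarrow> bool" where
  "connected_in A S \<longleftrightarrow> S \<noteq> {} \<and>
     (\<forall>u\<in>S. \<forall>v\<in>S. \<exists>xs. sn_walk A xs \<and> set xs \<subseteq> S \<and> hd xs = u \<and> last xs = v)"

definition support :: "('u \<Rightarrow> 'u \<Rightarrow> bool) \<Rightarrow> 'u set \<Rightarrow> 'u \<Rightarrow> 'u \<Rightarrow> nat" where
  "support A S u v = card {x \<in> S. A u x \<and> A v x}"

definition kd_truss :: "('u \<Rightarrow> 'u \<Rightarrow> bool) \<Rightarrow> 'u set \<Rightarrow> nat \<Rightarrow> nat \<Rightarrow> bool" where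
  "kd_truss A S k' d \<longleftrightarrow> connected_in A S
     \<and> (\<forall>u\<in>S. \<forall>v\<in>S. A u v \<longrightarrow> int (support A S u v) \<ge> int k' - 2)
     \<and> (\<forall>u\<in>S. \<forall>v\<in>S. dist_SN A u v < enat d)"

definition path_influence :: "('u \<Rightarrow> 'u \<Rightarrow> nat \<Rightarrow> real) \<Rightarrow> nat \<Rightarrow> (nat \<Rightarrow> real) \<Rightarrow> 'u list \<Rightarrow> real" where
  "path_influence tp m Tq xs = (\<Prod>i<length xs - 1. (\<Sum>j<m. tp (xs ! i) (xs ! Suc i) j * Tq j))"

definition ss_truss ::
  "'u set \<Rightarrow> ('u \<Rightarrow> 'u \<Rightarrow> bool) \<Rightarrow> ('v \<times> 'v) set \<Rightarrow> ('v \<Rightarrow> 'v \<Rightarrow> real) \<Rightarrow> ('u \<Rightarrow> 'v list)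
   \<Rightarrow> ('u \<Rightarrow> 'u \<Rightarrow> nat \<Rightarrow> real) \<Rightarrow> nat \<Rightarrow> (nat \<Rightarrow> real)
   \<Rightarrow> nat \<Rightarrow> nat \<Rightarrow> real \<Rightarrow> real \<Rightarrow> 'u set \<Rightarrow> bool" where
  "ss_truss U A E w loc tp m Tq k' d \<sigma> \<theta> S \<longleftrightarrow>
     S \<subseteq> U \<and> kd_truss A S k' d
     \<and> (\<forall>u\<in>S. \<forall>v\<in>S. avg_dist_RN E w loc u v < \<sigma>)
     \<and> (\<forall>u\<in>S. \<forall>v\<in>S. \<exists>xs. sn_walk A xs \<and> distinct xs \<and> set xs \<subseteq> S \<and> hd xs = u \<and> last xs = v
                         \<and> path_influence tp m Tq xs \<ge> \<theta>)"

definition piv_avg :: "('v \<times> 'v) set \<Rightarrow> ('v \<Rightarrow> 'v \<Rightarrow> real) \<Rightarrow> ('u \<Rightarrow> 'v list) \<Rightarrow> 'u \<Rightarrow> 'v \<Rightarrow> real" where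
  "piv_avg E w loc u p = sum_list (map (\<lambda>x. dist_RN E w x p) (loc u)) / real (length (loc u))"

definition lb_dist_RN :: "('v \<times> 'v) set \<Rightarrow> ('v \<Rightarrow> 'v \<Rightarrow> real) \<Rightarrow> ('u \<Rightarrow> 'v list) \<Rightarrow> 'v list \<Rightarrow> 'u \<Rightarrow> 'u set \<Rightarrow> real" where
  "lb_dist_RN E w loc rpiv q e = Max ((\<lambda>k.
      let aq = piv_avg E w loc q (rpiv ! k);
          lb = Min ((\<lambda>u. piv_avg E w loc u (rpiv ! k)) ` e);
          ub = Max ((\<lambda>u. piv_avg E w loc u (rpiv ! k)) ` e)
      in if aq < lb then lb - aq else if aq > ub then aq - ub else 0) ` {..<length rpiv})"

end

theory Submission
  imports Defs
begin

lemma walk_len_single[simp]: "walk_len w [x] = 0"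
  by (simp add: walk_len_def)

lemma walk_len_cons2[simp]: "walk_len w (x#y#zs) = w x y + walk_len w (y#zs)"
  unfolding walk_len_def by (simp add: sum.lessThan_Suc_shift del: sum.lessThan_Suc)

lemma rn_walk_single[simp]: "rn_walk E [x]"
  by (simp add: rn_walk_def)

lemma rn_walk_cons2[simp]: "rn_walk E (x#y#zs) \<longleftrightarrow> (x,y) \<in> E \<and> rn_walk E (y#zs)"
proof
  assume h: "rn_walk E (x#y#zs)"
  then have H: "\<And>i. Suc i < length (x#y#zs) \<Longrightarrow> ((x#y#zs) ! i, (x#y#zs) ! Suc i) \<in> E"
    unfolding rn_walk_def by blast
  have "(x,y) \<in> E" using H[of 0] by simp
  moreover have "rn_walk E (y#zs)" unfolding rn_walk_def
  proof (intro conjI allI impI)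
    fix i assume "Suc i < length (y#zs)"
    then have "Suc (Suc i) < length (x#y#zs)" by simp
    from H[OF this] show "((y#zs) ! i, (y#zs) ! Suc i) \<in> E" by simp
  qed simp
  ultimately show "(x,y) \<in> E \<and> rn_walk E (y#zs)" by blast
next
  assume h: "(x,y) \<in> E \<and> rn_walk E (y#zs)"
  then have H: "\<And>i. Suc i < length (y#zs) \<Longrightarrow> ((y#zs) ! i, (y#zs) ! Suc i) \<in> E"
    unfolding rn_walk_def by blast
  show "rn_walk E (x#y#zs)" unfolding rn_walk_def
  proof (intro conjI allI impI)
    fix i assume i: "Suc i < length (x#y#zs)"
    show "((x#y#zs) ! i, (x#y#zs) ! Suc i) \<in> E"
    proof (cases i)
      case 0 then show ?thesis using h by simp
    next
      case (Suc j)
      then have "Suc j < length (y#zs)" using i by simp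
      from H[OF this] show ?thesis using Suc by simp
    qed
  qed simp
qed

lemma walk_concat:
  assumes "rn_walk E xs" "rn_walk E ys" "last xs = hd ys"
  shows "rn_walk E (xs @ tl ys) \<and> hd (xs @ tl ys) = hd xs \<and> last (xs @ tl ys) = last ys
         \<and> walk_len w (xs @ tl ys) = walk_len w xs + walk_len w ys"
  using assms
proof (induction xs rule: induct_list012)
  case 1 then show ?case by (simp add: rn_walk_def)
next
  case (2 a)
  then show ?case using \<open>rn_walk E ys\<close> by (cases ys) (auto simp: rn_walk_def)
next
  case (3 a b rest)
  then have IH: "rn_walk E ((b#rest) @ tl ys) \<and> hd ((b#rest) @ tl ys) = b \<and> last ((b#rest) @ tl ys) = last ys
         \<and> walk_len w ((b#rest) @ tl ys) = walk_len w (b#rest) + walk_len w ys" by simp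
  have ne: "ys \<noteq> []" using 3 by (simp add: rn_walk_def)
  define zs where "zs = rest @ tl ys"
  have eq: "(b#rest) @ tl ys = b # zs" unfolding zs_def by simp
  have "(a#b#rest) @ tl ys = a # b # zs" using eq by simp
  then show ?case using IH eq 3 ne by (auto simp: last_append)
qed

lemma walk_nonneg:
  assumes "road_network V E w" "rn_walk E xs"
  shows "walk_len w xs \<ge> 0"
  using assms(2)
proof (induction xs rule: induct_list012)
  case 1 then show ?case by (simp add: walk_len_def)
next
  case (2 a) then show ?case by simp
next
  case (3 a b rest)
  then have "w a b \<ge> 0" using assms(1) unfolding road_network_def by auto
  then show ?case using 3 by simp
qed

lemma dist_tri:
  assumes rn: "road_network V E w" and V: "x \<in> V" "y \<in> V" "p \<in> V"
  shows "dist_RN E w x p \<le> dist_RN E w x y + dist_RN E w y p"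
proof -
  define W where "W a b = {walk_len w xs | xs. rn_walk E xs \<and> hd xs = a \<and> last xs = b}" for a b
  have ne: "W a b \<noteq> {}" if "a \<in> V" "b \<in> V" for a b
    using rn that unfolding road_network_def W_def by blast
  have bdd: "bdd_below (W a b)" for a b
    unfolding W_def bdd_below_def using walk_nonneg[OF rn] by blast
  have d: "dist_RN E w a b = Inf (W a b)" for a b unfolding dist_RN_def W_def by simp
  have "Inf (W x p) - Inf (W y p) \<le> Inf (W x y)"
  proof (rule cInf_greatest[OF ne[OF V(1,2)]])
    fix l1 assume "l1 \<in> W x y"
    then obtain xs where xs: "rn_walk E xs" "hd xs = x" "last xs = y" "l1 = walk_len w xs"
      unfolding W_def by blast
    have "Inf (W x p) - l1 \<le> Inf (W y p)"
    proof (rule cInf_greatest[OF ne[OF V(2,3)]])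
      fix l2 assume "l2 \<in> W y p"
      then obtain ys where ys: "rn_walk E ys" "hd ys = y" "last ys = p" "l2 = walk_len w ys"
        unfolding W_def by blast
      have c: "rn_walk E (xs @ tl ys) \<and> hd (xs @ tl ys) = hd xs \<and> last (xs @ tl ys) = last ys
         \<and> walk_len w (xs @ tl ys) = walk_len w xs + walk_len w ys"
        using walk_concat[of E xs ys w] xs ys by simp
      have c1: "rn_walk E (xs @ tl ys)" using c by blast
      have c2: "hd (xs @ tl ys) = hd xs" using c by blast
      have c3: "last (xs @ tl ys) = last ys" using c by blast
      have c4: "walk_len w (xs @ tl ys) = walk_len w xs + walk_len w ys" using c by blast
      have e1: "l1 + l2 = walk_len w (xs @ tl ys)" using c4 xs(4) ys(4) by linarith
      have e2a: "hd (xs @ tl ys) = x" using c2 xs(2) by (rule trans)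
      have e2b: "last (xs @ tl ys) = p" using c3 ys(3) by (rule trans)
      have "l1 + l2 \<in> W x p" unfolding W_def mem_Collect_eq
        apply (rule exI[of _ "xs @ tl ys"])
        apply (intro conjI)
           apply (rule e1)
          apply (rule c1)
         apply (rule e2a)
        apply (rule e2b)
        done
      then have "Inf (W x p) \<le> l1 + l2" by (rule cInf_lower[OF _ bdd])
      then show "Inf (W x p) - l1 \<le> l2" by simp
    qed
    then show "Inf (W x p) - Inf (W y p) \<le> l1" by simp
  qed
  then show ?thesis unfolding d by simp
qed

lemma piv_bound:
  assumes rn: "road_network V E w" and L: "loc u \<noteq> []" "set (loc u) \<subseteq> V" "loc v \<noteq> []" "set (loc v) \<subseteq> V"
    and p: "p \<in> V"
  shows "piv_avg E w loc u p - piv_avg E w loc v p \<le> avg_dist_RN E w loc u v"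
proof -
  define n1 where "n1 = real (length (loc u))"
  define n2 where "n2 = real (length (loc v))"
  have n1: "n1 > 0" using L unfolding n1_def by simp
  have n2: "n2 > 0" using L unfolding n2_def by simp
  define D where "D = (\<lambda>a b. dist_RN E w a b)"
  have step: "n2 * D x p \<le> sum_list (map (\<lambda>y. D x y) (loc v)) + sum_list (map (\<lambda>y. D y p) (loc v))"
    if x: "x \<in> set (loc u)" for x
  proof -
    have "sum_list (map (\<lambda>y. D x p) (loc v)) \<le> sum_list (map (\<lambda>y. D x y + D y p) (loc v))"
    proof (rule sum_list_mono)
      fix y assume "y \<in> set (loc v)"
      then show "D x p \<le> D x y + D y p" unfolding D_def
        using dist_tri[OF rn] x L p by blast
    qed
    also have "\<dots> = sum_list (map (\<lambda>y. D x y) (loc v)) + sum_list (map (\<lambda>y. D y p) (loc v))"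
      by (rule sum_list_addf)
    also have "sum_list (map (\<lambda>y. D x p) (loc v)) = n2 * D x p"
      unfolding n2_def by (rule sum_list_triv)
    finally show ?thesis .
  qed
  define S1 where "S1 = sum_list (map (\<lambda>x. D x p) (loc u))"
  define S2 where "S2 = sum_list (map (\<lambda>y. D y p) (loc v))"
  define T where "T = sum_list (map (\<lambda>x. sum_list (map (\<lambda>y. D x y) (loc v))) (loc u))"
  have "n2 * S1 = sum_list (map (\<lambda>x. n2 * D x p) (loc u))"
    unfolding S1_def by (rule sum_list_const_mult[symmetric])
  also have "\<dots> \<le> sum_list (map (\<lambda>x. sum_list (map (\<lambda>y. D x y) (loc v)) + S2) (loc u))"
    by (rule sum_list_mono) (use step in \<open>simp add: S2_def\<close>)
  also have "\<dots> = T + sum_list (map (\<lambda>x. S2) (loc u))"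
    unfolding T_def by (rule sum_list_addf)
  also have "sum_list (map (\<lambda>x. S2) (loc u)) = n1 * S2"
    unfolding n1_def by (rule sum_list_triv)
  finally have ineq': "n2 * S1 \<le> T + n1 * S2" .
  have "S1 / n1 - S2 / n2 \<le> T / (n1 * n2)"
  proof -
    have "S1 / n1 - S2 / n2 = (n2 * S1 - n1 * S2) / (n1 * n2)"
      using n1 n2 by (simp add: field_simps)
    also have "\<dots> \<le> T / (n1 * n2)"
      by (rule divide_right_mono) (use ineq' n1 n2 in auto)
    finally show ?thesis .
  qed
  then show ?thesis unfolding piv_avg_def avg_dist_RN_def S1_def S2_def T_def D_def n1_def n2_def .
qed

theorem lemma6:
  fixes V :: "'v set" and E :: "('v \<times> 'v) set" and w :: "'v \<Rightarrow> 'v \<Rightarrow> real"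
    and U :: "'u set" and A :: "'u \<Rightarrow> 'u \<Rightarrow> bool" and loc :: "'u \<Rightarrow> 'v list"
    and tp :: "'u \<Rightarrow> 'u \<Rightarrow> nat \<Rightarrow> real" and m :: nat
    and rpiv :: "'v list" and q :: 'u and e :: "'u set" and \<sigma> :: real
  assumes "road_network V E w"
    and "social_network U A"
    and "\<forall>u\<in>U. loc u \<noteq> [] \<and> set (loc u) \<subseteq> V"
    and "rpiv \<noteq> []" and "set rpiv \<subseteq> V"
    and "q \<in> U"
    and "finite e" and "e \<noteq> {}" and "e \<subseteq> U"
    and "\<sigma> > 0"
    and "lb_dist_RN E w loc rpiv q e > \<sigma>"
  shows "\<forall>(k'::nat) (d::nat) (\<theta>::real) (Tq::nat \<Rightarrow> real) S.
           ss_truss U A E w loc tp m Tq k' d \<sigma> \<theta> S \<and> q \<in> S \<longrightarrow> (\<forall>u\<in>e. u \<notin> S)"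
proof (intro allI impI ballI notI)
  fix k' d \<theta> Tq S u
  assume h: "ss_truss U A E w loc tp m Tq k' d \<sigma> \<theta> S \<and> q \<in> S" and ue: "u \<in> e" and uS: "u \<in> S"
  have a1: "avg_dist_RN E w loc q u < \<sigma>" and a2: "avg_dist_RN E w loc u q < \<sigma>"
    using h uS unfolding ss_truss_def by auto
  have uU: "u \<in> U" using ue assms(9) by auto
  define a where "a = (\<lambda>x k. piv_avg E w loc x (rpiv ! k))"
  have "\<forall>c \<in> (\<lambda>k.
      let aq = piv_avg E w loc q (rpiv ! k);
          lb = Min ((\<lambda>u. piv_avg E w loc u (rpiv ! k)) ` e);
          ub = Max ((\<lambda>u. piv_avg E w loc u (rpiv ! k)) ` e)
      in if aq < lb then lb - aq else if aq > ub then aq - ub else 0) ` {..<length rpiv}. c < \<sigma>" (is "\<forall>c\<in>?F. _")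
  proof
    fix c assume "c \<in> (\<lambda>k.
      let aq = piv_avg E w loc q (rpiv ! k);
          lb = Min ((\<lambda>u. piv_avg E w loc u (rpiv ! k)) ` e);
          ub = Max ((\<lambda>u. piv_avg E w loc u (rpiv ! k)) ` e)
      in if aq < lb then lb - aq else if aq > ub then aq - ub else 0) ` {..<length rpiv}"
    then obtain k where k: "k < length rpiv" and c: "c = (
      let aq = piv_avg E w loc q (rpiv ! k);
          lb = Min ((\<lambda>u. piv_avg E w loc u (rpiv ! k)) ` e);
          ub = Max ((\<lambda>u. piv_avg E w loc u (rpiv ! k)) ` e)
      in if aq < lb then lb - aq else if aq > ub then aq - ub else 0)" by auto
    have pV: "rpiv ! k \<in> V" using k assms(5) nth_mem by blast
    have b1: "piv_avg E w loc q (rpiv ! k) - piv_avg E w loc u (rpiv ! k) < \<sigma>"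
      using piv_bound[OF assms(1) _ _ _ _ pV, of loc q u] assms(3,6) uU a1 by fastforce
    have b2: "piv_avg E w loc u (rpiv ! k) - piv_avg E w loc q (rpiv ! k) < \<sigma>"
      using piv_bound[OF assms(1) _ _ _ _ pV, of loc u q] assms(3,6) uU a2 by fastforce
    have lb: "Min ((\<lambda>u. piv_avg E w loc u (rpiv ! k)) ` e) \<le> piv_avg E w loc u (rpiv ! k)"
      using ue assms(7) by (intro Min_le) auto
    have ub: "Max ((\<lambda>u. piv_avg E w loc u (rpiv ! k)) ` e) \<ge> piv_avg E w loc u (rpiv ! k)"
      using ue assms(7) by (intro Max_ge) auto
    show "c < \<sigma>" unfolding c Let_def using lb ub b1 b2 assms(10) by auto
  qed
  then have all: "\<forall>c\<in>?F. c < \<sigma>" .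
  have fin: "finite ?F" by simp
  have ne: "?F \<noteq> {}" using assms(4) by (simp add: lessThan_empty_iff)
  have "lb_dist_RN E w loc rpiv q e < \<sigma>"
    unfolding lb_dist_RN_def by (rule Max_less_iff[OF fin ne, THEN iffD2, OF all])
  then show False using assms(11) by simp
qed

end
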